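(* Let $(G,\alpha,\mathcal A)$ and $(G,\beta,\mathcal B)$ be unital $C^*$-dynamical systems of a finite group $G$, let $E$ be a $\mathcal B$-$\mathcal A$ Hilbert bimodule which is full with respect to both inner products, and let $\eta$ be a $(\beta,\alpha)$-compatible action of $G$ on $E$. If $\eta$ has the Rokhlin property, then $\eta$ is outer.
   Context: A $\mathcal B$-$\mathcal A$ Hilbert bimodule $E$ is a left Hilbert $\mathcal B$-module and right Hilbert $\mathcal A$-module with ${}_{\mathcal B}\langle x,y\rangle z=x\langle y,z\rangle_{\mathcal A}$; full means both inner products have dense span in $\mathcal B$, resp. $\mathcal A$. A $(\beta,\alpha)$-compatible action: $\eta_g$ invertible linear maps, $g\mapsto\eta_g$ a homomorphism, with $\eta_g(bx)=\beta_g(b)\eta_g(x)$, $\eta_g(xa)=\eta_g(x)\alpha_g(a)$, ${}_{\mathcal B}\langle\eta_gx,\eta_gy\rangle=\beta_g({}_{\mathcal B}\langle x,y\rangle)$, $\langle\eta_gx,\eta_gy\rangle_{\mathcal A}=\alpha_g(\langle x,y\rangle_{\mathcal A})$. Rokhlin property of $\eta$: for every $\epsilon>0$, finite $S_1,S_2\subset E$, $S_3\subset\mathcal B$, $S_4\subset\mathcal A$ there are mutually orthogonal positive contractions $(a_g)_{g\in G}\subset\mathcal A$ and $(b_g)_{g\in G}\subset\mathcal B$ with $\|\sum_ga_gu-u\|<\epsilon$ ($u\in S_2^*\cup S_4$), $\|\sum_gb_gv-v\|<\epsilon$ ($v\in S_1\cup S_3$), $\|\alpha_h(a_g)-a_{hg}\|<\epsilon$,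 $\|\beta_h(b_g)-b_{hg}\|<\epsilon$, $\|xa_g-b_gx\|<\epsilon$, $\|tb_g-b_gt\|<\epsilon$, $\|a_ga-aa_g\|<\epsilon$, $\|a_gy^*-y^*b_g\|<\epsilon$ for all $x\in S_1,y\in S_2,t\in S_3,a\in S_4$, $g,h\in G$. For unitaries $u\in\mathcal A$, $u'\in\mathcal B$, $\mathrm{Ad}(u',u)(x):=u'^*xu$. $\eta$ is outer if for every $t\in G\setminus\{e\}$, $\eta_t\ne\mathrm{Ad}(u',u)$ for all unitaries $u\in\mathcal A$, $u'\in\mathcal B$. *)

theory Defs
  imports "HOL-Analysis.Analysis" "HOL-Algebra.Group"
begin

text \<open>A unital C*-algebra is modelled on a type of class real_normed_algebra_1 and banach
(so it is a complete normed real algebra with unit 1 and norm 1 = 1, in particular nonzero),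
together with a complex scalar multiplication sm extending scaleR and an involution st.\<close>

definition cstar_algebra ::
  "(complex \<Rightarrow> 'a::{real_normed_algebra_1,banach} \<Rightarrow> 'a) \<Rightarrow> ('a \<Rightarrow> 'a) \<Rightarrow> bool" where
  "cstar_algebra sm st \<longleftrightarrow>
     (\<forall>x. sm 1 x = x) \<and>
     (\<forall>c d x. sm c (sm d x) = sm (c * d) x) \<and>
     (\<forall>c x y. sm c (x + y) = sm c x + sm c y) \<and>
     (\<forall>c d x. sm (c + d) x = sm c x + sm d x) \<and>
     (\<forall>r x. sm (complex_of_real r) x = scaleR r x) \<and>
     (\<forall>c x y. sm c (x * y) = sm c x * y \<and> sm c (x * y) = x * sm c y) \<and>
     (\<forall>c x. norm (sm c x) = cmod c * norm x) \<and>
     (\<forall>x. st (st x) = x) \<and>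
     (\<forall>x y. st (x + y) = st x + st y) \<and>
     (\<forall>c x. st (sm c x) = sm (cnj c) (st x)) \<and>
     (\<forall>x y. st (x * y) = st y * st x) \<and>
     (\<forall>x. norm (st x * x) = (norm x)\<^sup>2)"

definition cstar_positive :: "('a::times \<Rightarrow> 'a) \<Rightarrow> 'a \<Rightarrow> bool" where
  "cstar_positive st a \<longleftrightarrow> (\<exists>b. a = st b * b)"

definition positive_contraction :: "('a::real_normed_algebra \<Rightarrow> 'a) \<Rightarrow> 'a \<Rightarrow> bool" where
  "positive_contraction st a \<longleftrightarrow> cstar_positive st a \<and> norm a \<le> 1"

definition cstar_unitary :: "('a::monoid_mult \<Rightarrow> 'a) \<Rightarrow> 'a \<Rightarrow> bool" where
  "cstar_unitary st u \<longleftrightarrow> st u * u = 1 \<and> u * st u = 1"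

definition star_automorphism ::
  "(complex \<Rightarrow> 'a::ring \<Rightarrow> 'a) \<Rightarrow> ('a \<Rightarrow> 'a) \<Rightarrow> ('a \<Rightarrow> 'a) \<Rightarrow> bool" where
  "star_automorphism sm st f \<longleftrightarrow>
     bij f \<and>
     (\<forall>x y. f (x + y) = f x + f y) \<and>
     (\<forall>c x. f (sm c x) = sm c (f x)) \<and>
     (\<forall>x y. f (x * y) = f x * f y) \<and>
     (\<forall>x. f (st x) = st (f x))"

definition cstar_dynsys ::
  "'g monoid \<Rightarrow> (complex \<Rightarrow> 'a::{real_normed_algebra_1,banach} \<Rightarrow> 'a) \<Rightarrow> ('a \<Rightarrow> 'a)
     \<Rightarrow> ('g \<Rightarrow> 'a \<Rightarrow> 'a) \<Rightarrow> bool" where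
  "cstar_dynsys G sm st alpha \<longleftrightarrow>
     group G \<and> cstar_algebra sm st \<and>
     (\<forall>g\<in>carrier G. star_automorphism sm st (alpha g)) \<and>
     (\<forall>g\<in>carrier G. \<forall>h\<in>carrier G. alpha (g \<otimes>\<^bsub>G\<^esub> h) = alpha g \<circ> alpha h) \<and>
     alpha \<one>\<^bsub>G\<^esub> = id"

definition hnorm :: "('e \<Rightarrow> 'e \<Rightarrow> 'a::real_normed_vector) \<Rightarrow> 'e \<Rightarrow> real" where
  "hnorm ip x = sqrt (norm (ip x x))"

definition hcomplete :: "('e::ab_group_add \<Rightarrow> 'e \<Rightarrow> 'a::real_normed_vector) \<Rightarrow> bool" where
  "hcomplete ip \<longleftrightarrow>
     (\<forall>X::nat \<Rightarrow> 'e. (\<forall>e>0. \<exists>N. \<forall>m\<ge>N. \<forall>n\<ge>N. hnorm ip (X m - X n) < e)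
        \<longrightarrow> (\<exists>L. (\<lambda>n. hnorm ip (X n - L)) \<longlonglongrightarrow> 0))"

definition right_hilbert_module ::
  "(complex \<Rightarrow> 'e::ab_group_add \<Rightarrow> 'e) \<Rightarrow>
   (complex \<Rightarrow> 'a::{real_normed_algebra_1,banach} \<Rightarrow> 'a) \<Rightarrow> ('a \<Rightarrow> 'a) \<Rightarrow>
   ('e \<Rightarrow> 'a \<Rightarrow> 'e) \<Rightarrow> ('e \<Rightarrow> 'e \<Rightarrow> 'a) \<Rightarrow> bool" where
  "right_hilbert_module esm sm st ract ip \<longleftrightarrow>
     (\<forall>x. esm 1 x = x) \<and>
     (\<forall>c d x. esm c (esm d x) = esm (c * d) x) \<and>
     (\<forall>c x y. esm c (x + y) = esm c x + esm c y) \<and>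
     (\<forall>c d x. esm (c + d) x = esm c x + esm d x) \<and>
     (\<forall>x a a'. ract x (a * a') = ract (ract x a) a') \<and>
     (\<forall>x y a. ract (x + y) a = ract x a + ract y a) \<and>
     (\<forall>x a a'. ract x (a + a') = ract x a + ract x a') \<and>
     (\<forall>c x a. ract (esm c x) a = esm c (ract x a) \<and> ract x (sm c a) = esm c (ract x a)) \<and>
     (\<forall>x y z. ip x (y + z) = ip x y + ip x z) \<and>
     (\<forall>c x y. ip x (esm c y) = sm c (ip x y)) \<and>
     (\<forall>x y a. ip x (ract y a) = ip x y * a) \<and>
     (\<forall>x y. st (ip x y) = ip y x) \<and>
     (\<forall>x. cstar_positive st (ip x x)) \<and>
     (\<forall>x. ip x x = 0 \<longrightarrow> x = 0) \<and>
     hcomplete ip"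

definition left_hilbert_module ::
  "(complex \<Rightarrow> 'e::ab_group_add \<Rightarrow> 'e) \<Rightarrow>
   (complex \<Rightarrow> 'b::{real_normed_algebra_1,banach} \<Rightarrow> 'b) \<Rightarrow> ('b \<Rightarrow> 'b) \<Rightarrow>
   ('b \<Rightarrow> 'e \<Rightarrow> 'e) \<Rightarrow> ('e \<Rightarrow> 'e \<Rightarrow> 'b) \<Rightarrow> bool" where
  "left_hilbert_module esm sm st lact ip \<longleftrightarrow>
     (\<forall>x. esm 1 x = x) \<and>
     (\<forall>c d x. esm c (esm d x) = esm (c * d) x) \<and>
     (\<forall>c x y. esm c (x + y) = esm c x + esm c y) \<and>
     (\<forall>c d x. esm (c + d) x = esm c x + esm d x) \<and>
     (\<forall>x b b'. lact (b * b') x = lact b (lact b' x)) \<and>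
     (\<forall>x y b. lact b (x + y) = lact b x + lact b y) \<and>
     (\<forall>x b b'. lact (b + b') x = lact b x + lact b' x) \<and>
     (\<forall>c x b. lact b (esm c x) = esm c (lact b x) \<and> lact (sm c b) x = esm c (lact b x)) \<and>
     (\<forall>x y z. ip (x + y) z = ip x z + ip y z) \<and>
     (\<forall>c x y. ip (esm c x) y = sm c (ip x y)) \<and>
     (\<forall>x y b. ip (lact b x) y = b * ip x y) \<and>
     (\<forall>x y. st (ip x y) = ip y x) \<and>
     (\<forall>x. cstar_positive st (ip x x)) \<and>
     (\<forall>x. ip x x = 0 \<longrightarrow> x = 0) \<and>
     hcomplete ip"

text \<open>Fullness: the linear span of the values of the inner product is dense.
(The span equals the set of finite sums of inner products, since ip is linear in one slot.)\<close>
definition full_ip :: "('e \<Rightarrow> 'e \<Rightarrow> 'a::real_normed_vector) \<Rightarrow> bool" where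
  "full_ip ip \<longleftrightarrow> closure {\<Sum>i<n. ip (x i) (y i) | (n::nat) x y. True} = UNIV"

definition hilbert_bimodule ::
  "(complex \<Rightarrow> 'e::ab_group_add \<Rightarrow> 'e) \<Rightarrow>
   (complex \<Rightarrow> 'b::{real_normed_algebra_1,banach} \<Rightarrow> 'b) \<Rightarrow> ('b \<Rightarrow> 'b) \<Rightarrow>
   (complex \<Rightarrow> 'a::{real_normed_algebra_1,banach} \<Rightarrow> 'a) \<Rightarrow> ('a \<Rightarrow> 'a) \<Rightarrow>
   ('b \<Rightarrow> 'e \<Rightarrow> 'e) \<Rightarrow> ('e \<Rightarrow> 'a \<Rightarrow> 'e) \<Rightarrow>
   ('e \<Rightarrow> 'e \<Rightarrow> 'b) \<Rightarrow> ('e \<Rightarrow> 'e \<Rightarrow> 'a) \<Rightarrow> bool" where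
  "hilbert_bimodule esm smB stB smA stA lact ract ipB ipA \<longleftrightarrow>
     left_hilbert_module esm smB stB lact ipB \<and>
     right_hilbert_module esm smA stA ract ipA \<and>
     (\<forall>b x a. ract (lact b x) a = lact b (ract x a)) \<and>
     (\<forall>x y z. lact (ipB x y) z = ract x (ipA y z))"

definition compatible_action ::
  "'g monoid \<Rightarrow> (complex \<Rightarrow> 'e::ab_group_add \<Rightarrow> 'e) \<Rightarrow>
   ('b \<Rightarrow> 'e \<Rightarrow> 'e) \<Rightarrow> ('e \<Rightarrow> 'a \<Rightarrow> 'e) \<Rightarrow> ('e \<Rightarrow> 'e \<Rightarrow> 'b) \<Rightarrow> ('e \<Rightarrow> 'e \<Rightarrow> 'a) \<Rightarrow>
   ('g \<Rightarrow> 'b \<Rightarrow> 'b) \<Rightarrow> ('g \<Rightarrow> 'a \<Rightarrow> 'a) \<Rightarrow> ('g \<Rightarrow> 'e \<Rightarrow> 'e) \<Rightarrow> bool" where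
  "compatible_action G esm lact ract ipB ipA beta alpha eta \<longleftrightarrow>
     (\<forall>g\<in>carrier G. bij (eta g) \<and>
        (\<forall>x y. eta g (x + y) = eta g x + eta g y) \<and>
        (\<forall>c x. eta g (esm c x) = esm c (eta g x)) \<and>
        (\<forall>b x. eta g (lact b x) = lact (beta g b) (eta g x)) \<and>
        (\<forall>x a. eta g (ract x a) = ract (eta g x) (alpha g a)) \<and>
        (\<forall>x y. ipB (eta g x) (eta g y) = beta g (ipB x y)) \<and>
        (\<forall>x y. ipA (eta g x) (eta g y) = alpha g (ipA x y))) \<and>
     (\<forall>g\<in>carrier G. \<forall>h\<in>carrier G. eta (g \<otimes>\<^bsub>G\<^esub> h) = eta g \<circ> eta h)"

text \<open>Elements y* of the conjugate module (y in S2) are handled through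
the identities a y* = (y a*)* and y* b = (b* y)*, and the norm of E* equals the norm of E;
hence the conditions on S2* are stated for y in S2 directly on E.\<close>
definition rokhlin ::
  "'g monoid \<Rightarrow> ('b::{real_normed_algebra_1,banach} \<Rightarrow> 'b) \<Rightarrow> ('a::{real_normed_algebra_1,banach} \<Rightarrow> 'a) \<Rightarrow>
   ('b \<Rightarrow> 'e::ab_group_add \<Rightarrow> 'e) \<Rightarrow> ('e \<Rightarrow> 'a \<Rightarrow> 'e) \<Rightarrow> ('e \<Rightarrow> 'e \<Rightarrow> 'a) \<Rightarrow>
   ('g \<Rightarrow> 'b \<Rightarrow> 'b) \<Rightarrow> ('g \<Rightarrow> 'a \<Rightarrow> 'a) \<Rightarrow> bool" where
  "rokhlin G stB stA lact ract ipA beta alpha \<longleftrightarrow>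
     (\<forall>\<epsilon>>0. \<forall>S1 S2 :: 'e set. \<forall>S3 :: 'b set. \<forall>S4 :: 'a set.
        finite S1 \<longrightarrow> finite S2 \<longrightarrow> finite S3 \<longrightarrow> finite S4 \<longrightarrow>
        (\<exists>(a :: 'g \<Rightarrow> 'a) (b :: 'g \<Rightarrow> 'b).
           (\<forall>g\<in>carrier G. positive_contraction stA (a g) \<and> positive_contraction stB (b g)) \<and>
           (\<forall>g\<in>carrier G. \<forall>h\<in>carrier G. g \<noteq> h \<longrightarrow> a g * a h = 0 \<and> b g * b h = 0) \<and>
           (\<forall>y\<in>S2. hnorm ipA (ract y (\<Sum>g\<in>carrier G. a g) - y) < \<epsilon>) \<and>
           (\<forall>u\<in>S4. norm ((\<Sum>g\<in>carrier G. a g) * u - u) < \<epsilon>) \<and>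
           (\<forall>v\<in>S1. hnorm ipA (lact (\<Sum>g\<in>carrier G. b g) v - v) < \<epsilon>) \<and>
           (\<forall>v\<in>S3. norm ((\<Sum>g\<in>carrier G. b g) * v - v) < \<epsilon>) \<and>
           (\<forall>g\<in>carrier G. \<forall>h\<in>carrier G.
              norm (alpha h (a g) - a (h \<otimes>\<^bsub>G\<^esub> g)) < \<epsilon> \<and>
              norm (beta h (b g) - b (h \<otimes>\<^bsub>G\<^esub> g)) < \<epsilon>) \<and>
           (\<forall>g\<in>carrier G.
              (\<forall>x\<in>S1. hnorm ipA (ract x (a g) - lact (b g) x) < \<epsilon>) \<and>
              (\<forall>t\<in>S3. norm (t * b g - b g * t) < \<epsilon>) \<and>
              (\<forall>u\<in>S4. norm (a g * u - u * a g) < \<epsilon>) \<and>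
              (\<forall>y\<in>S2. hnorm ipA (ract y (a g) - lact (b g) y) < \<epsilon>))))"

definition Ad_bimod :: "('b \<Rightarrow> 'b) \<Rightarrow> ('b \<Rightarrow> 'e \<Rightarrow> 'e) \<Rightarrow> ('e \<Rightarrow> 'a \<Rightarrow> 'e) \<Rightarrow> 'b \<Rightarrow> 'a \<Rightarrow> 'e \<Rightarrow> 'e" where
  "Ad_bimod stB lact ract u' u = (\<lambda>x. lact (stB u') (ract x u))"

definition outer_action ::
  "'g monoid \<Rightarrow> ('b::monoid_mult \<Rightarrow> 'b) \<Rightarrow> ('a::monoid_mult \<Rightarrow> 'a) \<Rightarrow>
   ('b \<Rightarrow> 'e \<Rightarrow> 'e) \<Rightarrow> ('e \<Rightarrow> 'a \<Rightarrow> 'e) \<Rightarrow> ('g \<Rightarrow> 'e \<Rightarrow> 'e) \<Rightarrow> bool" where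
  "outer_action G stB stA lact ract eta \<longleftrightarrow>
     (\<forall>t\<in>carrier G - {\<one>\<^bsub>G\<^esub>}. \<forall>u u'. cstar_unitary stA u \<longrightarrow> cstar_unitary stB u' \<longrightarrow>
        eta t \<noteq> Ad_bimod stB lact ract u' u)"

end

theory Submission
  imports Defs
begin

lemma neumann:
  fixes r :: "'a::{real_normed_algebra_1,banach}"
  assumes "norm r < 1"
  shows "(1 - r) * (\<Sum>n. r^n) = 1"
proof -
  have s: "summable (\<lambda>n. r^n)"
  proof (rule summable_norm_cancel, rule summable_comparison_test)
    show "\<exists>N. \<forall>n\<ge>N. norm (norm (r ^ n)) \<le> norm r ^ n" by (auto intro: norm_power_ineq)
    show "summable (\<lambda>n. norm r ^ n)" using assms by (intro summable_geometric) simp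
  qed
  have "(1 - r) * (\<Sum>n. r^n) = (\<Sum>n. (1 - r) * r^n)" using suminf_mult[OF s] by simp
  also have "\<dots> = (\<Sum>n. r^n - r^Suc n)" by (simp add: algebra_simps)
  also have "\<dots> = 1"
  proof -
    have "(\<lambda>n. r^n - r^Suc n) sums (r^0 - 0)"
      by (rule telescope_sums') (rule LIMSEQ_power_zero[OF assms])
    then show ?thesis by (simp add: sums_iff)
  qed
  finally show ?thesis .
qed

lemma span_all:
  fixes ip :: "'e::ab_group_add \<Rightarrow> 'e \<Rightarrow> 'a::{real_normed_algebra_1,banach}"
  assumes RH: "right_hilbert_module esm sm st ract ip" and F: "full_ip ip"
  shows "\<exists>(n::nat) x y. a = (\<Sum>i<n. ip (x i) (y i))"
proof -
  let ?D = "{\<Sum>i<n. ip (x i) (y i) | (n::nat) (x::nat \<Rightarrow> 'e) y. True}"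
  have "(1::'a) \<in> closure ?D" using F unfolding full_ip_def by simp
  then obtain d where "d \<in> ?D" and dd: "dist d 1 < 1"
    by (meson closure_approachable zero_less_one)
  then obtain n and x :: "nat \<Rightarrow> 'e" and y where d: "d = (\<Sum>i<n. ip (x i) (y i))" by blast
  have nr: "norm (1 - d) < 1" using dd by (simp add: dist_norm norm_minus_commute)
  define v where "v = (\<Sum>k. (1 - d)^k)"
  have "(1 - (1 - d)) * v = 1" unfolding v_def by (rule neumann[OF nr])
  hence dv: "d * v = 1" by simp
  have "\<forall>x y b. ip x (ract y b) = ip x y * b" using RH unfolding right_hilbert_module_def by (elim conjE) assumption
  hence ipr: "\<And>x y b. ip x (ract y b) = ip x y * b" by blast
  have "a = d * (v * a)" by (metis dv mult.assoc mult_1_left)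
  also have "\<dots> = (\<Sum>i<n. ip (x i) (ract (y i) (v * a)))" unfolding d sum_distrib_right ipr ..
  finally show ?thesis by (intro exI)
qed

lemma ip_zero:
  assumes RH: "right_hilbert_module esm sm st ract ip"
  shows "ip x 0 = 0"
proof -
  have "\<forall>x y z. ip x (y + z) = ip x y + ip x z" using RH unfolding right_hilbert_module_def by (elim conjE) assumption
  hence "ip x (0 + 0) = ip x 0 + ip x 0" by blast
  thus ?thesis by simp
qed

lemma ract_diff:
  assumes RH: "right_hilbert_module esm sm st ract ip"
  shows "ract z (p - q) = ract z p - ract z q"
proof -
  have "\<forall>x a a'. ract x (a + a') = ract x a + ract x a'" using RH unfolding right_hilbert_module_def by (elim conjE) assumption
  hence "ract z ((p - q) + q) = ract z (p - q) + ract z q" by blast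
  thus ?thesis by (simp add: eq_diff_eq)
qed

lemma kill:
  fixes ip :: "'e::ab_group_add \<Rightarrow> 'e \<Rightarrow> 'a::{real_normed_algebra_1,banach}"
  assumes RH: "right_hilbert_module esm sm st ract ip" and F: "full_ip ip"
    and Z: "\<And>z. ract z d = 0"
  shows "d = 0"
proof -
  obtain n x y where one: "(1::'a) = (\<Sum>i<(n::nat). ip (x i) (y i))" using span_all[OF RH F] by blast
  have "\<forall>x y b. ip x (ract y b) = ip x y * b" using RH unfolding right_hilbert_module_def by (elim conjE) assumption
  hence ipr: "\<And>x y b. ip x (ract y b) = ip x y * b" by blast
  have "d = (\<Sum>i<n. ip (x i) (y i)) * d" using one by (metis mult_1_left)
  also have "\<dots> = (\<Sum>i<n. ip (x i) (ract (y i) d))" unfolding sum_distrib_right ipr ..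
  also have "\<dots> = 0" by (simp add: Z ip_zero[OF RH])
  finally show ?thesis .
qed

lemma inv_lact:
  assumes HB: "hilbert_bimodule esm smB stB smA stA lact ract ipB ipA"
    and cB: "cstar_algebra smB stB" and b: "stB b * b = 1"
  shows "ract z (ipA (lact b x) (lact b y)) = ract z (ipA x y)"
proof -
  have LH: "left_hilbert_module esm smB stB lact ipB" using HB unfolding hilbert_bimodule_def by blast
  have comp: "\<forall>x y z. lact (ipB x y) z = ract x (ipA y z)" using HB unfolding hilbert_bimodule_def by blast
  have lm: "\<forall>x b b'. lact (b * b') x = lact b (lact b' x)" using LH unfolding left_hilbert_module_def by (elim conjE) assumption
  have il: "\<forall>x y b. ipB (lact b x) y = b * ipB x y" using LH unfolding left_hilbert_module_def by (elim conjE) assumption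
  have isy: "\<forall>x y. stB (ipB x y) = ipB y x" using LH unfolding left_hilbert_module_def by (elim conjE) assumption
  have sm: "\<forall>x y. stB (x * y) = stB y * stB x" using cB unfolding cstar_algebra_def by (elim conjE) assumption
  have "ipB z (lact b x) = stB (ipB (lact b x) z)" using isy by simp
  also have "\<dots> = ipB z x * stB b" using il sm isy by simp
  finally have e: "ipB z (lact b x) = ipB z x * stB b" .
  have "ract z (ipA (lact b x) (lact b y)) = lact (ipB z (lact b x)) (lact b y)" using comp by simp
  also have "\<dots> = lact (ipB z x * stB b * b) y" using e lm by simp
  also have "\<dots> = lact (ipB z x) y" using b by (simp add: mult.assoc)
  also have "\<dots> = ract z (ipA x y)" using comp by simp
  finally show ?thesis .
qed


lemma ip_ract_left:
  assumes RH: "right_hilbert_module esm sm st ract ip" and cA: "cstar_algebra sm st"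
  shows "ip (ract x a) y = st a * ip x y"
proof -
  have ir: "\<forall>x y b. ip x (ract y b) = ip x y * b" using RH unfolding right_hilbert_module_def by (elim conjE) assumption
  have isy: "\<forall>x y. st (ip x y) = ip y x" using RH unfolding right_hilbert_module_def by (elim conjE) assumption
  have sm: "\<forall>x y. st (x * y) = st y * st x" using cA unfolding cstar_algebra_def by (elim conjE) assumption
  have "ip (ract x a) y = st (ip y (ract x a))" using isy by simp
  also have "\<dots> = st a * ip x y" using ir sm isy by simp
  finally show ?thesis .
qed

lemma unitary_norm:
  fixes u :: "'a::{real_normed_algebra_1,banach}"
  assumes cA: "cstar_algebra sm st" and u: "cstar_unitary st u"
  shows "norm u = 1" "norm (st u) = 1"
proof -
  have ci: "\<forall>x. norm (st x * x) = (norm x)\<^sup>2" using cA unfolding cstar_algebra_def by (elim conjE) assumption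
  have inv: "\<forall>x. st (st x) = x" using cA unfolding cstar_algebra_def by (elim conjE) assumption
  have "(norm u)\<^sup>2 = norm (st u * u)" using ci by simp
  also have "\<dots> = 1" using u unfolding cstar_unitary_def by simp
  finally have "(norm u)\<^sup>2 = 1" .
  thus "norm u = 1" using norm_ge_zero[of u] by (auto simp: power2_eq_1_iff)
  have "(norm (st u))\<^sup>2 = norm (st (st u) * st u)" using ci by simp
  also have "\<dots> = 1" using inv u unfolding cstar_unitary_def by simp
  finally have "(norm (st u))\<^sup>2 = 1" .
  thus "norm (st u) = 1" using norm_ge_zero[of "st u"] by (auto simp: power2_eq_1_iff)
qed

lemma pos_norm_sq:
  fixes c :: "'a::{real_normed_algebra_1,banach}"
  assumes cA: "cstar_algebra sm st" and p: "cstar_positive st c"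
  shows "norm (c * c) = (norm c)\<^sup>2"
proof -
  have ci: "\<forall>x. norm (st x * x) = (norm x)\<^sup>2" using cA unfolding cstar_algebra_def by (elim conjE) assumption
  have inv: "\<forall>x. st (st x) = x" using cA unfolding cstar_algebra_def by (elim conjE) assumption
  have sm: "\<forall>x y. st (x * y) = st y * st x" using cA unfolding cstar_algebra_def by (elim conjE) assumption
  obtain d where d: "c = st d * d" using p unfolding cstar_positive_def by blast
  have sc: "st c = c" unfolding d by (simp only: sm inv)
  have "norm (st c * c) = (norm c)\<^sup>2" using ci by blast
  thus ?thesis unfolding sc .
qed

lemma alpha_sum:
  fixes f :: "'a::ab_group_add \<Rightarrow> 'b::ab_group_add"
  assumes add: "\<forall>x y. f (x + y) = f x + f y"
  shows "f (\<Sum>i<(n::nat). g i) = (\<Sum>i<n. f (g i))"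
proof -
  have "f (0 + 0) = f 0 + f 0" using add by blast
  hence z: "f 0 = 0" by simp
  show ?thesis by (induction n) (simp_all add: z add)
qed


theorem corollary5p3:
  fixes G :: "'g monoid"
    and smA :: "complex \<Rightarrow> 'a::{real_normed_algebra_1,banach} \<Rightarrow> 'a" and stA :: "'a \<Rightarrow> 'a"
    and smB :: "complex \<Rightarrow> 'b::{real_normed_algebra_1,banach} \<Rightarrow> 'b" and stB :: "'b \<Rightarrow> 'b"
    and alpha :: "'g \<Rightarrow> 'a \<Rightarrow> 'a" and beta :: "'g \<Rightarrow> 'b \<Rightarrow> 'b"
    and esm :: "complex \<Rightarrow> 'e::ab_group_add \<Rightarrow> 'e"
    and lact :: "'b \<Rightarrow> 'e \<Rightarrow> 'e" and ract :: "'e \<Rightarrow> 'a \<Rightarrow> 'e"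
    and ipB :: "'e \<Rightarrow> 'e \<Rightarrow> 'b" and ipA :: "'e \<Rightarrow> 'e \<Rightarrow> 'a"
    and eta :: "'g \<Rightarrow> 'e \<Rightarrow> 'e"
  assumes "finite (carrier G)"
    and "cstar_dynsys G smA stA alpha"
    and "cstar_dynsys G smB stB beta"
    and "hilbert_bimodule esm smB stB smA stA lact ract ipB ipA"
    and "full_ip ipA" and "full_ip ipB"
    and "compatible_action G esm lact ract ipB ipA beta alpha eta"
    and "rokhlin G stB stA lact ract ipA beta alpha"
  shows "outer_action G stB stA lact ract eta"
proof -
  note HB = assms(4) and FA = assms(5)
  have grp: "group G" using assms(2) unfolding cstar_dynsys_def by (elim conjE) assumption
  have cA: "cstar_algebra smA stA" using assms(2) unfolding cstar_dynsys_def by (elim conjE) assumption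
  have autA: "\<forall>g\<in>carrier G. star_automorphism smA stA (alpha g)"
    using assms(2) unfolding cstar_dynsys_def by (elim conjE) assumption
  have cB: "cstar_algebra smB stB" using assms(3) unfolding cstar_dynsys_def by (elim conjE) assumption
  have RH: "right_hilbert_module esm smA stA ract ipA" using HB unfolding hilbert_bimodule_def by (elim conjE) assumption
  have compat: "\<forall>g\<in>carrier G. \<forall>x y. ipA (eta g x) (eta g y) = alpha g (ipA x y)"
    using assms(7) unfolding compatible_action_def by blast
  have ir: "\<forall>x y b. ipA x (ract y b) = ipA x y * b" using RH unfolding right_hilbert_module_def by (elim conjE) assumption
  have invB: "\<forall>x. stB (stB x) = x" using cB unfolding cstar_algebra_def by (elim conjE) assumption
  show ?thesis unfolding outer_action_def
  proof (intro ballI allI impI notI)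
    fix t u u'
    assume tin: "t \<in> carrier G - {\<one>\<^bsub>G\<^esub>}" and uA: "cstar_unitary stA u" and uB: "cstar_unitary stB u'"
      and eq: "eta t = Ad_bimod stB lact ract u' u"
    have tC: "t \<in> carrier G" and t1: "t \<noteq> \<one>\<^bsub>G\<^esub>" using tin by auto
    have uAu: "stA u * u = 1" using uA unfolding cstar_unitary_def by simp
    have bb: "stB (stB u') * stB u' = 1" using uB invB unfolding cstar_unitary_def by simp
    have ipinv: "alpha t (ipA x y) = stA u * ipA x y * u" for x y
    proof -
      have "alpha t (ipA x y) = ipA (eta t x) (eta t y)" using compat tC by simp
      also have "\<dots> = ipA (lact (stB u') (ract x u)) (lact (stB u') (ract y u))"
        using eq unfolding Ad_bimod_def by simp
      also have "\<dots> = ipA (ract x u) (ract y u)"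
      proof -
        have "ipA (lact (stB u') (ract x u)) (lact (stB u') (ract y u)) - ipA (ract x u) (ract y u) = 0"
          by (rule kill[OF RH FA]) (simp add: ract_diff[OF RH] inv_lact[OF HB cB bb])
        thus ?thesis by simp
      qed
      also have "\<dots> = stA u * ipA x y * u" using ip_ract_left[OF RH cA] ir by (simp add: mult.assoc)
      finally show ?thesis .
    qed
    have addA: "\<forall>x y. alpha t (x + y) = alpha t x + alpha t y"
      using autA tC unfolding star_automorphism_def by blast
    have aform: "alpha t a = stA u * a * u" for a
    proof -
      obtain n x y where a: "a = (\<Sum>i<(n::nat). ipA (x i) (y i))" using span_all[OF RH FA] by blast
      have "alpha t a = (\<Sum>i<n. alpha t (ipA (x i) (y i)))" unfolding a by (rule alpha_sum[OF addA])
      also have "\<dots> = (\<Sum>i<n. stA u * ipA (x i) (y i) * u)" by (simp add: ipinv)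
      also have "\<dots> = stA u * a * u" unfolding a by (simp add: sum_distrib_left sum_distrib_right)
      finally show ?thesis .
    qed
    define N where "N = card (carrier G)"
    define \<epsilon> :: real where "\<epsilon> = 1 / (8 * (real N + 1)^2)"
    have epos: "\<epsilon> > 0" unfolding \<epsilon>_def by simp
    have R: "\<exists>(a :: 'g \<Rightarrow> 'a) (b :: 'g \<Rightarrow> 'b). (\<forall>g\<in>carrier G. positive_contraction stA (a g) \<and> positive_contraction stB (b g)) \<and>
           (\<forall>g\<in>carrier G. \<forall>h\<in>carrier G. g \<noteq> h \<longrightarrow> a g * a h = 0 \<and> b g * b h = 0) \<and>
           (\<forall>y\<in>{}. hnorm ipA (ract y (\<Sum>g\<in>carrier G. a g) - y) < \<epsilon>) \<and>
           (\<forall>v\<in>{u}. norm ((\<Sum>g\<in>carrier G. a g) * v - v) < \<epsilon>) \<and>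
           (\<forall>v\<in>{}. hnorm ipA (lact (\<Sum>g\<in>carrier G. b g) v - v) < \<epsilon>) \<and>
           (\<forall>v\<in>{}. norm ((\<Sum>g\<in>carrier G. b g) * v - v) < \<epsilon>) \<and>
           (\<forall>g\<in>carrier G. \<forall>h\<in>carrier G.
              norm (alpha h (a g) - a (h \<otimes>\<^bsub>G\<^esub> g)) < \<epsilon> \<and>
              norm (beta h (b g) - b (h \<otimes>\<^bsub>G\<^esub> g)) < \<epsilon>) \<and>
           (\<forall>g\<in>carrier G.
              (\<forall>x\<in>{}. hnorm ipA (ract x (a g) - lact (b g) x) < \<epsilon>) \<and>
              (\<forall>t\<in>{}. norm (t * b g - b g * t) < \<epsilon>) \<and>
              (\<forall>v\<in>{u}. norm (a g * v - v * a g) < \<epsilon>) \<and>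
              (\<forall>y\<in>{}. hnorm ipA (ract y (a g) - lact (b g) y) < \<epsilon>))"
      by (rule assms(8)[unfolded rokhlin_def, rule_format, OF epos, of "{}" "{}" "{}" "{u}"]) auto
    then obtain a :: "'g \<Rightarrow> 'a" and b :: "'g \<Rightarrow> 'b" where H: "(\<forall>g\<in>carrier G. positive_contraction stA (a g) \<and> positive_contraction stB (b g)) \<and>
           (\<forall>g\<in>carrier G. \<forall>h\<in>carrier G. g \<noteq> h \<longrightarrow> a g * a h = 0 \<and> b g * b h = 0) \<and>
           (\<forall>y\<in>{}. hnorm ipA (ract y (\<Sum>g\<in>carrier G. a g) - y) < \<epsilon>) \<and>
           (\<forall>v\<in>{u}. norm ((\<Sum>g\<in>carrier G. a g) * v - v) < \<epsilon>) \<and>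
           (\<forall>v\<in>{}. hnorm ipA (lact (\<Sum>g\<in>carrier G. b g) v - v) < \<epsilon>) \<and>
           (\<forall>v\<in>{}. norm ((\<Sum>g\<in>carrier G. b g) * v - v) < \<epsilon>) \<and>
           (\<forall>g\<in>carrier G. \<forall>h\<in>carrier G.
              norm (alpha h (a g) - a (h \<otimes>\<^bsub>G\<^esub> g)) < \<epsilon> \<and>
              norm (beta h (b g) - b (h \<otimes>\<^bsub>G\<^esub> g)) < \<epsilon>) \<and>
           (\<forall>g\<in>carrier G.
              (\<forall>x\<in>{}. hnorm ipA (ract x (a g) - lact (b g) x) < \<epsilon>) \<and>
              (\<forall>t\<in>{}. norm (t * b g - b g * t) < \<epsilon>) \<and>
              (\<forall>v\<in>{u}. norm (a g * v - v * a g) < \<epsilon>) \<and>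
              (\<forall>y\<in>{}. hnorm ipA (ract y (a g) - lact (b g) y) < \<epsilon>))"
      by (elim exE) (rule that)
    have H1: "\<forall>g\<in>carrier G. positive_contraction stA (a g) \<and> positive_contraction stB (b g)"
      using H by (elim conjE) assumption
    have H2: "\<forall>g\<in>carrier G. \<forall>h\<in>carrier G. g \<noteq> h \<longrightarrow> a g * a h = 0 \<and> b g * b h = 0"
      using H by (elim conjE) assumption
    have H4: "\<forall>v\<in>{u}. norm ((\<Sum>g\<in>carrier G. a g) * v - v) < \<epsilon>"
      using H by (elim conjE) assumption
    have H7: "\<forall>g\<in>carrier G. \<forall>h\<in>carrier G.
              norm (alpha h (a g) - a (h \<otimes>\<^bsub>G\<^esub> g)) < \<epsilon> \<and>
              norm (beta h (b g) - b (h \<otimes>\<^bsub>G\<^esub> g)) < \<epsilon>"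
      using H by (elim conjE) assumption
    have H8: "\<forall>g\<in>carrier G.
              (\<forall>x\<in>{}. hnorm ipA (ract x (a g) - lact (b g) x) < \<epsilon>) \<and>
              (\<forall>t\<in>{}. norm (t * b g - b g * t) < \<epsilon>) \<and>
              (\<forall>v\<in>{u}. norm (a g * v - v * a g) < \<epsilon>) \<and>
              (\<forall>y\<in>{}. hnorm ipA (ract y (a g) - lact (b g) y) < \<epsilon>)"
      using H by (elim conjE) assumption
    have pc: "\<And>g. g \<in> carrier G \<Longrightarrow> positive_contraction stA (a g)" using H1 by simp
    have orth: "\<And>g h. g \<in> carrier G \<Longrightarrow> h \<in> carrier G \<Longrightarrow> g \<noteq> h \<Longrightarrow> a g * a h = 0" using H2 by simp
    have sumu: "norm ((\<Sum>g\<in>carrier G. a g) * u - u) < \<epsilon>" using H4 by simp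
    have equi: "\<And>g h. g \<in> carrier G \<Longrightarrow> h \<in> carrier G \<Longrightarrow> norm (alpha h (a g) - a (h \<otimes>\<^bsub>G\<^esub> g)) < \<epsilon>" using H7 by simp
    have comm: "\<And>g. g \<in> carrier G \<Longrightarrow> norm (a g * u - u * a g) < \<epsilon>" using H8 by simp
    have nu: "norm u = 1" and nsu: "norm (stA u) = 1" using unitary_norm[OF cA uA] by auto
    define B :: real where "B = 1 / (2 * (real N + 1))"
    have small: "norm (a g) < B" if g: "g \<in> carrier G" for g
    proof -
      have tg: "t \<otimes>\<^bsub>G\<^esub> g \<in> carrier G" using grp tC g by (simp add: group.is_monoid monoid.m_closed)
      have tgne: "t \<otimes>\<^bsub>G\<^esub> g \<noteq> g" using group.r_cancel_one[OF grp g tC] t1 by simp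
      have e1: "alpha t (a g) - a g = stA u * (a g * u - u * a g)"
      proof -
        have "stA u * (a g * u - u * a g) = stA u * a g * u - (stA u * u) * a g" by (simp add: algebra_simps)
        thus ?thesis using aform uAu by simp
      qed
      have "norm (alpha t (a g) - a g) \<le> norm (stA u) * norm (a g * u - u * a g)" unfolding e1 by (rule norm_mult_ineq)
      hence n1: "norm (alpha t (a g) - a g) < \<epsilon>" using comm[OF g] nsu by simp
      have n2: "norm (alpha t (a g) - a (t \<otimes>\<^bsub>G\<^esub> g)) < \<epsilon>" using equi[OF g tC] .
      have "a g - a (t \<otimes>\<^bsub>G\<^esub> g) = (alpha t (a g) - a (t \<otimes>\<^bsub>G\<^esub> g)) - (alpha t (a g) - a g)" by simp
      hence "norm (a g - a (t \<otimes>\<^bsub>G\<^esub> g)) \<le> norm (alpha t (a g) - a (t \<otimes>\<^bsub>G\<^esub> g)) + norm (alpha t (a g) - a g)"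
        by (metis norm_triangle_ineq4)
      hence n3: "norm (a g - a (t \<otimes>\<^bsub>G\<^esub> g)) < 2 * \<epsilon>" using n1 n2 by simp
      have "a g * a g = a g * (a g - a (t \<otimes>\<^bsub>G\<^esub> g))" using orth[OF g tg tgne[symmetric]] by (simp add: right_diff_distrib)
      hence "norm (a g * a g) \<le> norm (a g) * norm (a g - a (t \<otimes>\<^bsub>G\<^esub> g))" by (metis norm_mult_ineq)
      also have "\<dots> \<le> 1 * norm (a g - a (t \<otimes>\<^bsub>G\<^esub> g))"
        using pc[OF g] unfolding positive_contraction_def by (intro mult_right_mono) auto
      finally have "norm (a g * a g) < 2 * \<epsilon>" using n3 by simp
      moreover have "norm (a g * a g) = (norm (a g))\<^sup>2"
        using pos_norm_sq[OF cA] pc[OF g] unfolding positive_contraction_def by blast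
      moreover have "2 * \<epsilon> = B\<^sup>2" unfolding \<epsilon>_def B_def by (simp add: power_divide power_mult_distrib) (simp add: power2_eq_square algebra_simps)
      ultimately have "(norm (a g))\<^sup>2 < B\<^sup>2" by simp
      moreover have "B \<ge> 0" unfolding B_def by simp
      ultimately show ?thesis by (rule power_less_imp_less_base)
    qed
    have "norm u \<le> norm ((\<Sum>g\<in>carrier G. a g) * u) + norm (u - (\<Sum>g\<in>carrier G. a g) * u)"
      by (rule norm_triangle_sub)
    also have "norm (u - (\<Sum>g\<in>carrier G. a g) * u) < \<epsilon>" using sumu by (simp add: norm_minus_commute)
    also have "norm ((\<Sum>g\<in>carrier G. a g) * u) \<le> norm (\<Sum>g\<in>carrier G. a g) * norm u" by (rule norm_mult_ineq)
    also have "\<dots> \<le> (\<Sum>g\<in>carrier G. norm (a g))" using nu norm_sum by simp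
    also have "\<dots> \<le> real N * B" unfolding N_def using small by (intro sum_bounded_above) (simp add: less_imp_le)
    finally have "1 < real N * B + \<epsilon>" using nu by simp
    moreover have "real N * B + \<epsilon> < 1"
    proof -
      have "real N * B < 1/2" unfolding B_def by (simp add: field_simps)
      moreover have "\<epsilon> \<le> 1/8" unfolding \<epsilon>_def by (simp add: field_simps)
      ultimately show ?thesis by simp
    qed
    ultimately show False by simp
  qed
qed

end
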